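(* For any $\varepsilon>0$ (and any $\gamma>1$) there exist instances with outcomes satisfying UPRF such that: one such outcome is not $\left(\frac{3+\sqrt{17}}{2}-\varepsilon\right)$-proportionally fair; one such outcome does not satisfy $(3-\varepsilon)$-individual fairness; and one such outcome is not in the $\left(\gamma,\frac{\gamma+1}{\gamma-1}-\varepsilon\right)$-transferable core.
   Context: Let $(\mathcal X,d)$ be a metric space, $N=[n]$ a set of agents and $C$ a set of candidates located in $\mathcal X$, $k\in\mathbb N^+$; an outcome is $W\subseteq C$ with $|W|\le k$; $B(i,r)=\{x\in\mathcal X:d(i,x)\le r\}$; $d(i,W)=\min_{c\in W}d(i,c)$. UPRF: there are no $\ell\in\mathbb N$, no $N'\subseteq N$ with $|N'|\ge\ell n/k$, and no $y\in\mathbb R$ with $\max_{i,i'\in N'}d(i,i')\le y$ and $|\bigcup_{i\in N'}B(i,y)\cap W|<\ell$. $\alpha$-proportional fairness: there is no $N'\subseteq N$ with $|N'|\ge n/k$ and $c\in C\setminus W$ with $\alpha\,d(i,c)<d(i,W)$ for all $i\in N'$. $\beta$-individual fairness: $d(i,W)\le\beta\,r(i)$ for all $i\in N$, where $r(i)=\min\{r: |B(i,r)\cap N|\ge n/k\}$. $(\gamma,\alpha)$-transferable core: there is no $N'\subseteq N$ and $c\in C\setminus W$ with $|N'|\ge\gamma n/k$ and $\alpha\sum_{i\in N'}d(i,c)<\sum_{i\in N'}d(i,W)$. *)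

theory Defs
  imports Complex_Main
begin

text \<open>An instance: a metric d on the point set (type nat), n agents 0..n-1 located at
  points loc i, a finite nonempty set C of candidate points, and committee size k.\<close>

definition metric_on :: "(nat \<Rightarrow> nat \<Rightarrow> real) \<Rightarrow> bool" where
  "metric_on d \<longleftrightarrow> (\<forall>x y. d x y \<ge> 0) \<and> (\<forall>x y. d x y = 0 \<longleftrightarrow> x = y)
     \<and> (\<forall>x y. d x y = d y x) \<and> (\<forall>x y z. d x z \<le> d x y + d y z)"

definition is_instance :: "(nat \<Rightarrow> nat \<Rightarrow> real) \<Rightarrow> nat \<Rightarrow> (nat \<Rightarrow> nat) \<Rightarrow> nat set \<Rightarrow> nat \<Rightarrow> bool" where
  "is_instance d n loc C k \<longleftrightarrow> metric_on d \<and> n \<ge> 1 \<and> k \<ge> 1 \<and> finite C \<and> C \<noteq> {}"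

definition outcome :: "nat set \<Rightarrow> nat \<Rightarrow> nat set \<Rightarrow> bool" where
  "outcome C k W \<longleftrightarrow> W \<subseteq> C \<and> card W \<le> k"

text \<open>d(i,W) for agent i (W nonempty).\<close>
definition distW :: "(nat \<Rightarrow> nat \<Rightarrow> real) \<Rightarrow> (nat \<Rightarrow> nat) \<Rightarrow> nat set \<Rightarrow> nat \<Rightarrow> real" where
  "distW d loc W i = Min ((\<lambda>c. d (loc i) c) ` W)"

definition UPRF :: "(nat \<Rightarrow> nat \<Rightarrow> real) \<Rightarrow> nat \<Rightarrow> (nat \<Rightarrow> nat) \<Rightarrow> nat \<Rightarrow> nat set \<Rightarrow> bool" where
  "UPRF d n loc k W \<longleftrightarrow> \<not> (\<exists>(l::nat) N' y. N' \<subseteq> {..<n} \<and> real (card N') \<ge> real l * real n / real k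
      \<and> (\<forall>i\<in>N'. \<forall>i'\<in>N'. d (loc i) (loc i') \<le> y)
      \<and> card {c \<in> W. \<exists>i\<in>N'. d (loc i) c \<le> y} < l)"

definition prop_fair :: "real \<Rightarrow> (nat \<Rightarrow> nat \<Rightarrow> real) \<Rightarrow> nat \<Rightarrow> (nat \<Rightarrow> nat) \<Rightarrow> nat set \<Rightarrow> nat \<Rightarrow> nat set \<Rightarrow> bool" where
  "prop_fair \<alpha> d n loc C k W \<longleftrightarrow> \<not> (\<exists>N' c. N' \<subseteq> {..<n} \<and> real (card N') \<ge> real n / real k
      \<and> c \<in> C - W \<and> (\<forall>i\<in>N'. \<alpha> * d (loc i) c < distW d loc W i))"

definition rad :: "(nat \<Rightarrow> nat \<Rightarrow> real) \<Rightarrow> nat \<Rightarrow> (nat \<Rightarrow> nat) \<Rightarrow> nat \<Rightarrow> nat \<Rightarrow> real" where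
  "rad d n loc k i = Inf {r. real (card {j \<in> {..<n}. d (loc i) (loc j) \<le> r}) \<ge> real n / real k}"

definition indiv_fair :: "real \<Rightarrow> (nat \<Rightarrow> nat \<Rightarrow> real) \<Rightarrow> nat \<Rightarrow> (nat \<Rightarrow> nat) \<Rightarrow> nat \<Rightarrow> nat set \<Rightarrow> bool" where
  "indiv_fair \<beta> d n loc k W \<longleftrightarrow> (\<forall>i<n. distW d loc W i \<le> \<beta> * rad d n loc k i)"

definition transferable_core :: "real \<Rightarrow> real \<Rightarrow> (nat \<Rightarrow> nat \<Rightarrow> real) \<Rightarrow> nat \<Rightarrow> (nat \<Rightarrow> nat) \<Rightarrow> nat set \<Rightarrow> nat \<Rightarrow> nat set \<Rightarrow> bool" where
  "transferable_core \<gamma> \<alpha> d n loc C k W \<longleftrightarrow> \<not> (\<exists>N' c. N' \<subseteq> {..<n} \<and> c \<in> C - W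
      \<and> real (card N') \<ge> \<gamma> * real n / real k
      \<and> \<alpha> * (\<Sum>i\<in>N'. d (loc i) c) < (\<Sum>i\<in>N'. distW d loc W i))"

end

theory Submission
  imports Defs
begin


definition spd :: "(nat \<Rightarrow> nat) \<Rightarrow> (nat \<Rightarrow> real) \<Rightarrow> nat \<Rightarrow> nat \<Rightarrow> real" where
  "spd g h u v = (if u = v then 0 else if g u = g v then \<bar>h u - h v\<bar> else h u + h v)"

lemma spd_metric:
  assumes h0: "\<And>u. h u \<ge> 0"
    and inj: "\<And>u v. g u = g v \<Longrightarrow> h u = h v \<Longrightarrow> u = v"
    and z: "\<And>u v. h u = 0 \<Longrightarrow> h v = 0 \<Longrightarrow> u = v"
  shows "metric_on (spd g h)"
  unfolding metric_on_def
proof (intro conjI allI)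
  fix x y show "spd g h x y \<ge> 0" using h0[of x] h0[of y] by (simp add: spd_def)
next
  fix x y show "(spd g h x y = 0) = (x = y)"
    using h0[of x] h0[of y] inj[of x y] z[of x y] by (auto simp: spd_def)
next
  fix x y show "spd g h x y = spd g h y x" by (auto simp: spd_def)
next
  fix x y z show "spd g h x z \<le> spd g h x y + spd g h y z"
    using h0[of x] h0[of y] h0[of z] by (auto simp: spd_def)
qed

lemma uprf_k1:
  assumes n: "n \<ge> 1" and fW: "finite W"
    and H: "\<And>y. (\<forall>i<n. \<forall>i'<n. d (loc i) (loc i') \<le> y) \<Longrightarrow> \<exists>c\<in>W. \<exists>i<n. d (loc i) c \<le> y"
  shows "UPRF d n loc 1 W"
  unfolding UPRF_def
proof
  assume "\<exists>(l::nat) N' y. N' \<subseteq> {..<n} \<and> real (card N') \<ge> real l * real n / real 1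
      \<and> (\<forall>i\<in>N'. \<forall>i'\<in>N'. d (loc i) (loc i') \<le> y)
      \<and> card {c \<in> W. \<exists>i\<in>N'. d (loc i) c \<le> y} < l"
  then obtain l N' y where s: "N' \<subseteq> {..<n}" and c: "real (card N') \<ge> real l * real n"
    and dm: "\<forall>i\<in>N'. \<forall>i'\<in>N'. d (loc i) (loc i') \<le> y"
    and lt: "card {c \<in> W. \<exists>i\<in>N'. d (loc i) c \<le> y} < l" by auto
  have cn: "card N' \<le> n" using s by (metis card_lessThan card_mono finite_lessThan)
  have "l \<ge> 1" using lt by auto
  have "l \<le> 1"
  proof (rule ccontr)
    assume "\<not> l \<le> 1"
    then have "real l * real n \<ge> 2 * real n" using n by (intro mult_right_mono) auto
    then show False using c cn n by (smt (verit) of_nat_le_iff of_nat_1)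
  qed
  then have l1: "l = 1" using \<open>l \<ge> 1\<close> by simp
  then have "card N' \<ge> n" using c by simp
  then have "N' = {..<n}" using s cn by (intro card_subset_eq) auto
  then have "\<forall>i<n. \<forall>i'<n. d (loc i) (loc i') \<le> y" using dm by auto
  then obtain c i where "c \<in> W" "i < n" "d (loc i) c \<le> y" using H by blast
  then have "c \<in> {c \<in> W. \<exists>i\<in>N'. d (loc i) c \<le> y}" using \<open>N' = _\<close> by auto
  then have "card {c \<in> W. \<exists>i\<in>N'. d (loc i) c \<le> y} \<ge> 1"
    using fW by (metis (no_types, lifting) One_nat_def Suc_leI card_gt_0_iff empty_iff finite_subset mem_Collect_eq subsetI)
  then show False using lt l1 by simp
qed



lemma part1:
  fixes \<epsilon> :: real assumes "\<epsilon> > 0"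
  shows "\<exists>d n loc C k W. is_instance d n loc C k \<and> outcome C k W \<and> W \<noteq> {} \<and> UPRF d n loc k W
            \<and> \<not> prop_fair ((3 + sqrt 17) / 2 - \<epsilon>) d n loc C k W"
proof -
  define a :: real where "a = (3 + sqrt 17) / 2"
  have apos: "a > 0"
  proof -
    have "sqrt 17 \<ge> (0::real)" by simp
    then have "3 + sqrt 17 > (0::real)" by linarith
    then show ?thesis unfolding a_def by simp
  qed
  have a2: "a * a = 3 * a + 2"
  proof -
    have s: "sqrt 17 * sqrt 17 = (17::real)" by simp
    have "((3 + sqrt 17) / 2) * ((3 + sqrt 17) / 2) = (9 + 6 * sqrt 17 + sqrt 17 * sqrt 17) / (4::real)"
      by (simp add: algebra_simps)
    then show ?thesis using s unfolding a_def by simp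
  qed
  define g :: "nat \<Rightarrow> nat" where "g v = (if v = 2 then 1 else if v \<le> 1 then v else v - 1)" for v
  define h :: "nat \<Rightarrow> real" where "h v = (if v = 0 then 0 else if v = 1 then 1 else if v = 2 then 1 + a
     else if v \<le> 4 then a / 2 else 1)" for v
  define d where "d = spd g h"
  define loc :: "nat \<Rightarrow> nat" where "loc i = (if i = 0 then 1 else if i = 1 then 3 else 4)" for i
  have met: "metric_on d" unfolding d_def
  proof (rule spd_metric)
    fix u show "0 \<le> h u" using apos by (simp add: h_def)
  next
    fix u v assume "g u = g v" "h u = h v" show "u = v"
      proof -
        have "u = v \<or> (u = 1 \<and> v = 2) \<or> (u = 2 \<and> v = 1)" using \<open>g u = g v\<close>
          unfolding g_def by (auto split: if_splits)
        then show ?thesis using \<open>h u = h v\<close> apos unfolding h_def by auto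
      qed
  next
    fix u v assume "h u = 0" "h v = 0" show "u = v"
      proof (rule ccontr)
        assume "u \<noteq> v"
        then have "u \<noteq> 0 \<or> v \<noteq> 0" by auto
        then show False using \<open>h u = 0\<close> \<open>h v = 0\<close> apos unfolding h_def by (auto split: if_splits)
      qed
  qed
  have inst: "is_instance d 3 loc {0, 2} 1" using met by (simp add: is_instance_def)
  have out: "outcome {0, 2} 1 {2}" by (simp add: outcome_def)
  have dW: "distW d loc {2} i = d (loc i) 2" for i by (simp add: distW_def)
  have up: "UPRF d 3 loc 1 {2}"
  proof (rule uprf_k1)
    fix y assume "\<forall>i<3. \<forall>i'<3. d (loc i) (loc i') \<le> y"
    then have "d (loc 1) (loc 2) \<le> y" by auto
    then have "d (loc 0) 2 \<le> y" using apos by (simp add: d_def spd_def loc_def g_def h_def)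
    moreover have "(2::nat) \<in> {2}" "(0::nat) < 3" by auto
    ultimately show "\<exists>c\<in>{2}. \<exists>i<3. d (loc i) c \<le> y" by blast
  qed auto
  have key: "\<forall>i\<in>{..<3}. (a - \<epsilon>) * d (loc i) 0 < distW d loc {2} i"
    proof
      fix i :: nat assume "i \<in> {..<3}"
      then have "i = 0 \<or> i = 1 \<or> i = 2" by auto
      moreover have "(a - \<epsilon>) * 1 < a" using assms by simp
      moreover have "(a - \<epsilon>) * (a / 2) < a / 2 + (1 + a)"
      proof -
        have "(a - \<epsilon>) * (a / 2) < a * (a / 2)" using assms apos by (intro mult_strict_right_mono) auto
        also have "\<dots> = a / 2 + (1 + a)" using a2 by (simp add: field_simps)
        finally show ?thesis .
      qed
      ultimately show "(a - \<epsilon>) * d (loc i) 0 < distW d loc {2} i"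
      proof -
        have e: "d 1 0 = 1" "d 1 2 = a" "d 3 0 = a/2" "d 4 0 = a/2" "d 3 2 = a/2 + (1+a)" "d 4 2 = a/2 + (1+a)"
          using apos by (simp_all add: d_def spd_def g_def h_def)
        show ?thesis using \<open>i = 0 \<or> i = 1 \<or> i = 2\<close>
        proof (elim disjE)
          assume "i = 0" then have "loc i = 1" by (simp add: loc_def)
          then show ?thesis using \<open>(a - \<epsilon>) * 1 < a\<close> by (simp only: dW e)
        next
          assume "i = 1" then have "loc i = 3" by (simp add: loc_def)
          then show ?thesis using \<open>(a - \<epsilon>) * (a / 2) < a / 2 + (1 + a)\<close> by (simp only: dW e)
        next
          assume "i = 2" then have "loc i = 4" by (simp add: loc_def)
          then show ?thesis using \<open>(a - \<epsilon>) * (a / 2) < a / 2 + (1 + a)\<close> by (simp only: dW e)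
        qed
      qed
    qed
  have "{..<3::nat} \<subseteq> {..<3} \<and> real (card {..<3::nat}) \<ge> real 3 / real 1 \<and> (0::nat) \<in> {0,2} - {2}" by simp
  then have npf: "\<not> prop_fair (a - \<epsilon>) d 3 loc {0, 2} 1 {2}"
    unfolding prop_fair_def using key by blast
  show ?thesis using inst out up npf unfolding a_def by blast
qed



lemma part2:
  fixes \<epsilon> :: real assumes "\<epsilon> > 0"
  shows "\<exists>d n loc C k W. is_instance d n loc C k \<and> outcome C k W \<and> W \<noteq> {} \<and> UPRF d n loc k W
            \<and> \<not> indiv_fair (3 - \<epsilon>) d n loc k W"
proof -
  define d :: "nat \<Rightarrow> nat \<Rightarrow> real" where "d x y = \<bar>real x - real y\<bar>" for x y
  define loc :: "nat \<Rightarrow> nat" where "loc i = i" for i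
  have met: "metric_on d" unfolding metric_on_def d_def by auto
  have inst: "is_instance d 3 loc {4} 1" using met by (simp add: is_instance_def)
  have out: "outcome {4} 1 {4}" by (simp add: outcome_def)
  have dW: "distW d loc {4} 1 = 3" by (simp add: distW_def d_def loc_def)
  have up: "UPRF d 3 loc 1 {4}"
  proof (rule uprf_k1)
    fix y assume "\<forall>i<3. \<forall>i'<3. d (loc i) (loc i') \<le> y"
    then have "d (loc 2) (loc 0) \<le> y" by auto
    then have "d (loc 2) 4 \<le> y" by (simp add: d_def loc_def)
    moreover have "(4::nat) \<in> {4}" "(2::nat) < 3" by auto
    ultimately show "\<exists>c\<in>{4}. \<exists>i<3. d (loc i) c \<le> y" by blast
  qed auto
  have S: "{r. real (card {j \<in> {..<3}. d (loc 1) (loc j) \<le> r}) \<ge> real 3 / real 1} = {1..}"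
  proof (intro set_eqI iffI)
    fix r assume "r \<in> {r. real (card {j \<in> {..<3}. d (loc 1) (loc j) \<le> r}) \<ge> real 3 / real 1}"
    then have c: "card {j \<in> {..<3}. d (loc 1) (loc j) \<le> r} \<ge> 3" by simp
    show "r \<in> {1..}"
    proof (rule ccontr)
      assume "r \<notin> {1..}"
      then have "r < 1" by simp
      then have "{j \<in> {..<3}. d (loc 1) (loc j) \<le> r} \<subseteq> {1}" by (auto simp: d_def loc_def)
      then have "card {j \<in> {..<3}. d (loc 1) (loc j) \<le> r} \<le> 1"
        by (metis card.empty card.insert card_mono empty_iff finite.intros(1) finite.intros(2) One_nat_def)
      then show False using c by simp
    qed
  next
    fix r :: real assume "r \<in> {1..}"
    then have "{j \<in> {..<3}. d (loc 1) (loc j) \<le> r} = {..<3}" by (auto simp: d_def loc_def)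
    then show "r \<in> {r. real (card {j \<in> {..<3}. d (loc 1) (loc j) \<le> r}) \<ge> real 3 / real 1}" by simp
  qed
  have rad: "rad d 3 loc 1 1 = 1" unfolding rad_def using S by simp
  have "\<not> indiv_fair (3 - \<epsilon>) d 3 loc 1 {4}"
    unfolding indiv_fair_def using dW rad assms by (auto intro!: exI[of _ 1])
  then show ?thesis using inst out up by blast
qed



definition g3 :: "nat \<Rightarrow> nat" where "g3 v = (v + 1) div 2"
definition h3 :: "nat \<Rightarrow> real" where "h3 v = (if v = 0 then 0 else if odd v then 1 else 2)"
definition d3 where "d3 = spd g3 h3"
definition pt :: "nat \<Rightarrow> nat" where "pt t = (if t = 0 then 0 else 2 * t - 1)"
definition loc3 :: "nat \<Rightarrow> nat \<Rightarrow> nat" where "loc3 N i = pt (i div N)"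
definition W3 :: "nat \<Rightarrow> nat set" where "W3 N = (\<lambda>t. 2 * t) ` {1..N}"

lemma met3: "metric_on d3"
  unfolding d3_def
proof (rule spd_metric)
  fix u show "0 \<le> h3 u" by (simp add: h3_def)
next
  fix u v assume "g3 u = g3 v" "h3 u = h3 v" then show "u = v"
    unfolding g3_def h3_def by (auto split: if_splits) presburger+
next
  fix u v assume "h3 u = 0" "h3 v = 0" then show "u = v"
    unfolding h3_def by (auto split: if_splits)
qed

lemma dpt: "d3 (pt s) (pt t) = (if s = t then 0 else if s = 0 \<or> t = 0 then 1 else 2)"
  unfolding d3_def spd_def pt_def g3_def h3_def by auto

lemma dptw: "u \<ge> 1 \<Longrightarrow> d3 (pt s) (2 * u) = (if s = 0 then 2 else if s = u then 1 else 3)"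
  unfolding d3_def spd_def pt_def g3_def h3_def by auto

lemma fiber: fixes N :: nat assumes "N \<ge> 1" shows "{i. i div N = t} = {t * N..<t * N + N}"
proof (intro set_eqI iffI)
  fix i assume "i \<in> {i. i div N = t}"
  then have e: "i div N = t" by simp
  have "i = (i div N) * N + i mod N" by simp
  moreover have "i mod N < N" using assms by simp
  ultimately show "i \<in> {t * N..<t * N + N}" using e by auto
next
  fix i assume "i \<in> {t * N..<t * N + N}"
  then have "N * t \<le> i" "i < N * Suc t" by (auto simp: algebra_simps)
  then show "i \<in> {i. i div N = t}" using div_nat_eqI by auto
qed

lemma card_fibers: fixes N :: nat
  assumes N: "N \<ge> 1" and f: "finite (A::nat set)"
  shows "card A \<le> N * card ((\<lambda>i. i div N) ` A)"
proof -
  have "A \<subseteq> (\<Union>t\<in>(\<lambda>i. i div N) ` A. {i. i div N = t})" by auto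
  then have "card A \<le> card (\<Union>t\<in>(\<lambda>i. i div N) ` A. {i. i div N = t})"
    by (intro card_mono) (auto simp: fiber[OF N] f)
  also have "\<dots> \<le> (\<Sum>t\<in>(\<lambda>i. i div N) ` A. card {i. i div N = t})"
    by (intro card_UN_le) (use f in auto)
  also have "\<dots> = N * card ((\<lambda>i. i div N) ` A)" by (simp add: fiber[OF N])
  finally show ?thesis .
qed

lemma uprf3:
  assumes N: "N \<ge> 1"
  shows "UPRF d3 (N * (N + 1)) (loc3 N) N (W3 N)"
  unfolding UPRF_def
proof
  let ?n = "N * (N + 1)"
  assume "\<exists>(l::nat) N' y. N' \<subseteq> {..<?n} \<and> real (card N') \<ge> real l * real ?n / real N
      \<and> (\<forall>i\<in>N'. \<forall>i'\<in>N'. d3 (loc3 N i) (loc3 N i') \<le> y)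
      \<and> card {c \<in> W3 N. \<exists>i\<in>N'. d3 (loc3 N i) c \<le> y} < l"
  then obtain l N' y where s: "N' \<subseteq> {..<?n}" and c0: "real (card N') \<ge> real l * real ?n / real N"
    and dm: "\<forall>i\<in>N'. \<forall>i'\<in>N'. d3 (loc3 N i) (loc3 N i') \<le> y"
    and lt: "card {c \<in> W3 N. \<exists>i\<in>N'. d3 (loc3 N i) c \<le> y} < l" by blast
  define Cnt where "Cnt = {c \<in> W3 N. \<exists>i\<in>N'. d3 (loc3 N i) c \<le> y}"
  define H where "H = (\<lambda>i. i div N) ` N'"
  have fN: "finite N'" using s finite_subset by blast
  have fH: "finite H" using fN H_def by simp
  have fC: "finite Cnt" unfolding Cnt_def W3_def by simp
  have ltC: "card Cnt < l" using lt Cnt_def by simp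
  have c: "l * (N + 1) \<le> card N'"
  proof -
    have "real l * real ?n / real N = real (l * (N + 1))" using N by (simp add: field_simps)
    then show ?thesis using c0 by linarith
  qed
  have cn: "card N' \<le> ?n" using s by (metis card_lessThan card_mono finite_lessThan)
  have cNH: "card N' \<le> N * card H" unfolding H_def by (rule card_fibers[OF N fN])
  have Hle: "t \<le> N" if tH: "t \<in> H" for t
  proof -
    obtain i where "i \<in> N'" "t = i div N" using tH H_def by auto
    then have "i < N * (N + 1)" using s by auto
    then have "i div N < N + 1" using div_less_iff_less_mult[of N i "N+1"] N by (simp add: algebra_simps)
    then show ?thesis using \<open>t = i div N\<close> by simp
  qed
  have locH: "loc3 N i = pt (i div N)" for i by (simp add: loc3_def)
  show False
  proof (cases "card H \<le> 1")
    case True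
    then have "l * (N + 1) \<le> N" using c cNH by (metis dual_order.trans mult_le_mono2 nat_mult_1_right)
    then have "l = 0" by (cases l) auto
    then show False using ltC by simp
  next
    case False
    have "\<not> (\<forall>a1\<in>H. \<forall>a2\<in>H. a1 = a2)" using False card_le_Suc0_iff_eq[OF fH] by simp
    then obtain t u where tu: "t \<in> H" "u \<in> H" "t \<noteq> u" by blast
    then obtain i j where ij: "i \<in> N'" "j \<in> N'" "i div N = t" "j div N = u" using H_def by auto
    have y1: "y \<ge> 1"
    proof -
      have "d3 (loc3 N i) (loc3 N j) \<le> y" using dm ij by auto
      moreover have "d3 (loc3 N i) (loc3 N j) \<ge> 1" using tu ij by (simp add: locH dpt)
      ultimately show ?thesis by linarith
    qed
    have inC: "2 * t' \<in> Cnt" if th: "t' \<in> H" "t' \<noteq> 0" for t'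
    proof -
      obtain i' where "i' \<in> N'" "i' div N = t'" using th H_def by auto
      moreover have "2 * t' \<in> W3 N" using Hle[OF th(1)] th(2) by (auto simp: W3_def)
      moreover have "d3 (loc3 N i') (2 * t') = 1" using th(2) \<open>i' div N = t'\<close> by (simp add: locH dptw)
      ultimately show ?thesis using y1 unfolding Cnt_def by (intro CollectI conjI bexI[of _ i']) auto
    qed
    have cC: "card (H - {0}) \<le> card Cnt"
    proof -
      have "(\<lambda>t. 2 * t) ` (H - {0}) \<subseteq> Cnt" using inC by auto
      then have "card ((\<lambda>t. 2 * t) ` (H - {0})) \<le> card Cnt" using fC by (intro card_mono)
      moreover have "card ((\<lambda>t. 2 * t) ` (H - {0})) = card (H - {0})" by (intro card_image) (auto simp: inj_on_def)
      ultimately show ?thesis by simp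
    qed
    show False
    proof (cases "0 \<in> H")
      case False
      then have "card Cnt \<ge> card H" using cC by simp
      then have "l \<le> card H"
      proof -
        have "l * (N + 1) \<le> card H * N" using c cNH by (simp add: mult.commute)
        show ?thesis
        proof (rule ccontr)
          assume "\<not> l \<le> card H"
          then have "Suc (card H) \<le> l" by simp
          then have "Suc (card H) * (N + 1) \<le> l * (N + 1)" by (rule mult_le_mono1)
          moreover have "card H * N < Suc (card H) * (N + 1)" by (simp add: algebra_simps)
          ultimately show False using \<open>l * (N + 1) \<le> card H * N\<close> by linarith
        qed
      qed
      then show False using ltC \<open>card Cnt \<ge> card H\<close> by simp
    next
      case True
      show False
      proof (cases "card H = 2")
        case True
        then have "card (H - {0}) = 1" using \<open>0 \<in> H\<close> fH by simp
        then have "card Cnt \<ge> 1" using cC by simp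
        have "l * (N + 1) \<le> 2 * N" using c cNH True by (simp add: mult.commute)
        then have "l \<le> 1" by (cases "l \<ge> 2") (auto dest: mult_le_mono1[of 2 l "N + 1"])
        then show False using ltC \<open>card Cnt \<ge> 1\<close> by simp
      next
        case False
        then have "card (H - {0}) \<ge> 2" using \<open>0 \<in> H\<close> fH \<open>\<not> card H \<le> 1\<close> by simp
        then have "\<not> (\<forall>a1\<in>H - {0}. \<forall>a2\<in>H - {0}. a1 = a2)"
          using card_le_Suc0_iff_eq[of "H - {0}"] fH by auto
        then obtain t1 t2 where tt: "t1 \<in> H - {0}" "t2 \<in> H - {0}" "t1 \<noteq> t2" by blast
        then obtain i1 i2 where ii: "i1 \<in> N'" "i2 \<in> N'" "i1 div N = t1" "i2 div N = t2" using H_def by auto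
        have y2: "y \<ge> 2"
        proof -
          have "d3 (loc3 N i1) (loc3 N i2) \<le> y" using dm ii by auto
          moreover have "d3 (loc3 N i1) (loc3 N i2) = 2" using tt ii by (simp add: locH dpt)
          ultimately show ?thesis by linarith
        qed
        obtain i0 where i0: "i0 \<in> N'" "i0 div N = 0" using \<open>0 \<in> H\<close> H_def by auto
        have "Cnt = W3 N"
        proof
          show "Cnt \<subseteq> W3 N" unfolding Cnt_def by auto
          show "W3 N \<subseteq> Cnt"
          proof
            fix w assume "w \<in> W3 N"
            then obtain u where "w = 2 * u" "u \<ge> 1" by (auto simp: W3_def)
            then have "d3 (loc3 N i0) w = 2" using i0 by (simp add: locH dptw)
            then show "w \<in> Cnt" using y2 i0 \<open>w \<in> W3 N\<close> unfolding Cnt_def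
              by (intro CollectI conjI bexI[of _ i0]) auto
          qed
        qed
        then have "card Cnt = N" by (simp add: W3_def card_image inj_on_def)
        have "l * (N + 1) \<le> N * (N + 1)" using c cn by simp
        then have "l \<le> N" using mult_le_cancel2[of l "N+1" N] by simp
        then show False using ltC \<open>card Cnt = N\<close> by simp
      qed
    qed
  qed
qed



lemma ineq3:
  fixes \<gamma> \<epsilon> b Nr :: real
  assumes g: "\<gamma> > 1" and e: "\<epsilon> > 0" and b0: "0 \<le> b" and bl: "b < (\<gamma> - 1) * Nr + \<gamma> + 1"
    and Nl: "\<epsilon> * (\<gamma> - 1) * (\<gamma> - 1) * Nr \<ge> 2 * (\<gamma> + 1)" and Np: "Nr > 0"
  shows "((\<gamma> + 1) / (\<gamma> - 1) - \<epsilon>) * b < 2 * Nr + b"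
proof -
  define q where "q = \<gamma> - 1"
  have q: "q > 0" using g q_def by simp
  have r: "(\<gamma> + 1) / (\<gamma> - 1) = 1 + 2 / q" using q unfolding q_def by (simp add: field_simps)
  have "(2 / q - \<epsilon>) * b < 2 * Nr"
  proof (cases "2 / q - \<epsilon> \<le> 0")
    case True
    then have "(2 / q - \<epsilon>) * b \<le> 0" using b0 by (simp add: mult_nonpos_nonneg)
    then show ?thesis using Np by linarith
  next
    case False
    then have "(2 / q - \<epsilon>) * b < (2 / q - \<epsilon>) * (q * Nr + \<gamma> + 1)"
      using bl q_def by (intro mult_strict_left_mono) auto
    also have "\<dots> = 2 * Nr + 2 * (\<gamma> + 1) / q - \<epsilon> * q * Nr - \<epsilon> * (\<gamma> + 1)"
      using q by (simp add: field_simps)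
    also have "\<dots> \<le> 2 * Nr"
    proof -
      have "2 * (\<gamma> + 1) / q \<le> \<epsilon> * q * Nr"
        using Nl q unfolding q_def by (simp add: pos_divide_le_eq mult.commute mult.left_commute)
      moreover have "\<epsilon> * (\<gamma> + 1) \<ge> 0" using e g by simp
      ultimately show ?thesis by linarith
    qed
    finally show ?thesis .
  qed
  then show ?thesis unfolding r by (simp add: algebra_simps)
qed

lemma distW3:
  assumes N: "N \<ge> 1" and i: "i < N * (N + 1)"
  shows "distW d3 (loc3 N) (W3 N) i = (if i div N = 0 then 2 else 1)"
proof -
  define t where "t = i div N"
  have tN: "t \<le> N"
  proof -
    have "i div N < N + 1" using div_less_iff_less_mult[of N i "N+1"] N i by (simp add: algebra_simps)
    then show ?thesis unfolding t_def by simp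
  qed
  have img: "(\<lambda>c. d3 (loc3 N i) c) ` W3 N = (\<lambda>s. d3 (pt t) (2 * s)) ` {1..N}"
    unfolding W3_def loc3_def t_def by (simp add: image_image)
  have fin: "finite ((\<lambda>s. d3 (pt t) (2 * s)) ` {1..N})" by simp
  show ?thesis
  proof (cases "t = 0")
    case True
    have "Min ((\<lambda>s. d3 (pt t) (2 * s)) ` {1..N}) = 2"
    proof (rule Min_eqI[OF fin])
      show "\<And>y. y \<in> (\<lambda>s. d3 (pt t) (2 * s)) ` {1..N} \<Longrightarrow> 2 \<le> y" using True by (auto simp: dptw)
      show "2 \<in> (\<lambda>s. d3 (pt t) (2 * s)) ` {1..N}" using True N dptw[of 1 0]
        by (intro image_eqI[of _ _ 1]) auto
    qed
    then show ?thesis using True unfolding distW_def img t_def by simp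
  next
    case False
    have "Min ((\<lambda>s. d3 (pt t) (2 * s)) ` {1..N}) = 1"
    proof (rule Min_eqI[OF fin])
      show "\<And>y. y \<in> (\<lambda>s. d3 (pt t) (2 * s)) ` {1..N} \<Longrightarrow> 1 \<le> y" using False by (auto simp: dptw)
      show "1 \<in> (\<lambda>s. d3 (pt t) (2 * s)) ` {1..N}" using False tN
        by (intro image_eqI[of _ _ t]) (auto simp: dptw)
    qed
    then show ?thesis using False unfolding distW_def img t_def by simp
  qed
qed

lemma part3:
  fixes \<epsilon> \<gamma> :: real
  assumes e: "\<epsilon> > 0" and g: "\<gamma> > 1"
  shows "\<exists>d n loc C k W. is_instance d n loc C k \<and> outcome C k W \<and> W \<noteq> {} \<and> UPRF d n loc k W
            \<and> \<not> transferable_core \<gamma> ((\<gamma> + 1) / (\<gamma> - 1) - \<epsilon>) d n loc C k W"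
proof -
  define X where "X = max \<gamma> (2 * (\<gamma> + 1) / (\<epsilon> * (\<gamma> - 1) * (\<gamma> - 1)))"
  define N where "N = nat \<lceil>X\<rceil> + 1"
  have XN: "X \<le> real N" unfolding N_def by linarith
  have N1: "N \<ge> 1" unfolding N_def by simp
  have gN: "\<gamma> \<le> real N" using XN unfolding X_def by simp
  have Nl: "\<epsilon> * (\<gamma> - 1) * (\<gamma> - 1) * real N \<ge> 2 * (\<gamma> + 1)"
  proof -
    have p: "\<epsilon> * (\<gamma> - 1) * (\<gamma> - 1) > 0" using e g by simp
    have "2 * (\<gamma> + 1) / (\<epsilon> * (\<gamma> - 1) * (\<gamma> - 1)) \<le> real N" using XN unfolding X_def by simp
    then show ?thesis using p by (simp add: pos_divide_le_eq mult.commute)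
  qed
  define n where "n = N * (N + 1)"
  define M where "M = nat \<lceil>\<gamma> * (N + 1)\<rceil>"
  have M1: "real M \<ge> \<gamma> * (N + 1)" unfolding M_def by linarith
  have M2: "real M < \<gamma> * (N + 1) + 1"
  proof -
    have pos: "\<gamma> * (N + 1) > 0" using g by simp
    then have "0 \<le> \<lceil>\<gamma> * (N + 1)\<rceil>" by simp
    then have "real M = of_int \<lceil>\<gamma> * (N + 1)\<rceil>" unfolding M_def by simp
    moreover have "of_int \<lceil>\<gamma> * (N + 1)\<rceil> - 1 < \<gamma> * (N + 1)" using ceiling_correct by blast
    ultimately show ?thesis by linarith
  qed
  have MN: "N \<le> M"
  proof -
    have "1 * real (N + 1) \<le> \<gamma> * real (N + 1)" using g by (intro mult_right_mono) auto
    then have a: "real (N + 1) \<le> \<gamma> * real (N + 1)" by (metis mult_1)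
    have b: "real N \<le> real (N + 1)" by simp
    have "real N \<le> real M" using order_trans[OF b order_trans[OF a M1]] .
    then show ?thesis by simp
  qed
  have Mn: "M \<le> n"
  proof -
    have "\<gamma> * real (N + 1) \<le> real N * real (N + 1)" by (rule mult_right_mono[OF gN]) simp
    also have "\<dots> = real n" unfolding n_def by (simp only: of_nat_mult)
    finally have "\<gamma> * (N + 1) \<le> real n" .
    then have "\<lceil>\<gamma> * (N + 1)\<rceil> \<le> int n" by (simp add: ceiling_le_iff)
    then show ?thesis unfolding M_def by (simp add: nat_le_iff)
  qed
  define C where "C = insert 0 (W3 N)"
  have W0: "0 \<notin> W3 N" by (auto simp: W3_def)
  have cW: "card (W3 N) = N" by (simp add: W3_def card_image inj_on_def)
  have inst: "is_instance d3 n (loc3 N) C N"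
    using met3 N1 unfolding is_instance_def C_def n_def W3_def by simp
  have out: "outcome C N (W3 N)" unfolding outcome_def C_def using cW by auto
  have ne: "W3 N \<noteq> {}" using N1 by (auto simp: W3_def)
  have up: "UPRF d3 n (loc3 N) N (W3 N)" unfolding n_def by (rule uprf3[OF N1])
  have d0: "d3 (loc3 N i) 0 = (if i div N = 0 then 0 else 1)" for i
    using dpt[of "i div N" 0] by (simp add: loc3_def pt_def)
  have split: "{..<M} = {..<N} \<union> {N..<M}" using MN by auto
  have lowdiv: "i div N = 0 \<longleftrightarrow> i < N" for i using N1 by (simp add: Euclidean_Rings.div_eq_0_iff)
  have S1: "(\<Sum>i\<in>{..<M}. d3 (loc3 N i) 0) = real M - real N"
  proof -
    have "(\<Sum>i\<in>{..<M}. d3 (loc3 N i) 0) = (\<Sum>i\<in>{..<N}. d3 (loc3 N i) 0) + (\<Sum>i\<in>{N..<M}. d3 (loc3 N i) 0)"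
      unfolding split by (rule sum.union_disjoint) auto
    also have "\<dots> = 0 + (\<Sum>i\<in>{N..<M}. 1)" using lowdiv by (simp add: d0)
    finally show ?thesis using MN by simp
  qed
  have S2: "(\<Sum>i\<in>{..<M}. distW d3 (loc3 N) (W3 N) i) = 2 * real N + (real M - real N)"
  proof -
    have "(\<Sum>i\<in>{..<M}. distW d3 (loc3 N) (W3 N) i) = (\<Sum>i\<in>{..<N}. distW d3 (loc3 N) (W3 N) i) + (\<Sum>i\<in>{N..<M}. distW d3 (loc3 N) (W3 N) i)"
      unfolding split by (rule sum.union_disjoint) auto
    also have "\<dots> = (\<Sum>i\<in>{..<N}. 2) + (\<Sum>i\<in>{N..<M}. 1)"
    proof (intro arg_cong2[where f = "(+)"] sum.cong refl)
      fix i assume "i \<in> {..<N}" then show "distW d3 (loc3 N) (W3 N) i = 2"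
        using distW3[OF N1, of i] MN Mn lowdiv unfolding n_def by auto
    next
      fix i assume "i \<in> {N..<M}" then show "distW d3 (loc3 N) (W3 N) i = 1"
        using distW3[OF N1, of i] MN Mn lowdiv unfolding n_def by auto
    qed
    finally show ?thesis using MN by simp
  qed
  have key: "((\<gamma> + 1) / (\<gamma> - 1) - \<epsilon>) * (real M - real N) < 2 * real N + (real M - real N)"
    using ineq3[OF g e, of "real M - real N" "real N"] MN M2 Nl N1 by (simp add: algebra_simps)
  have "\<not> transferable_core \<gamma> ((\<gamma> + 1) / (\<gamma> - 1) - \<epsilon>) d3 n (loc3 N) C N (W3 N)"
    unfolding transferable_core_def
  proof (intro notI, elim notE, intro exI[of _ "{..<M}"] exI[of _ 0] conjI)
    show "{..<M} \<subseteq> {..<n}" using Mn by auto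
    show "0 \<in> C - W3 N" using W0 C_def by simp
    show "\<gamma> * real n / real N \<le> real (card {..<M})"
    proof -
      have "real n / real N = real (N + 1)" using N1 unfolding n_def by (simp only: of_nat_mult) simp
      then have "\<gamma> * real n / real N = \<gamma> * real (N + 1)" by (metis times_divide_eq_right)
      then show ?thesis using M1 by simp
    qed
    show "((\<gamma> + 1) / (\<gamma> - 1) - \<epsilon>) * (\<Sum>i\<in>{..<M}. d3 (loc3 N i) 0) < (\<Sum>i\<in>{..<M}. distW d3 (loc3 N) (W3 N) i)"
      unfolding S1 S2 by (rule key)
  qed
  then show ?thesis using inst out ne up by blast
qed

theorem theorem7:
  fixes \<epsilon> \<gamma> :: real
  assumes "\<epsilon> > 0" and "\<gamma> > 1"
  shows "(\<exists>d n loc C k W. is_instance d n loc C k \<and> outcome C k W \<and> W \<noteq> {} \<and> UPRF d n loc k W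
            \<and> \<not> prop_fair ((3 + sqrt 17) / 2 - \<epsilon>) d n loc C k W)
       \<and> (\<exists>d n loc C k W. is_instance d n loc C k \<and> outcome C k W \<and> W \<noteq> {} \<and> UPRF d n loc k W
            \<and> \<not> indiv_fair (3 - \<epsilon>) d n loc k W)
       \<and> (\<exists>d n loc C k W. is_instance d n loc C k \<and> outcome C k W \<and> W \<noteq> {} \<and> UPRF d n loc k W
            \<and> \<not> transferable_core \<gamma> ((\<gamma> + 1) / (\<gamma> - 1) - \<epsilon>) d n loc C k W)"
  using part1[OF assms(1)] part2[OF assms(1)] part3[OF assms] by blast

end
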